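(* Let $f_d\in\mathbb{Z}[t]$ be an irreducible polynomial of degree $d$ with leading coefficient $A$, and define $\phi_d(x,y)=y^df_d(x/y)$. Suppose that there exists a quadratic polynomial $g\in\mathbb{Q}[t]$ such that $f_d(g(t))$ is reducible in $\mathbb{Q}[t]$. Then the equation $Az^2=\phi_d(x,y)$ has a solution $(x,y,z)\in\mathbb{Q}^3$ with $yz\ne 0$. *)

theory Defs
  imports "HOL-Computational_Algebra.Polynomial"
begin

text \<open>Homogenization of an integer polynomial f of degree d:
  phi(x,y) = y^d f(x/y) = sum_{i=0..d} a_i x^i y^(d-i), evaluated over the rationals.\<close>
definition homog :: "int poly \<Rightarrow> rat \<Rightarrow> rat \<Rightarrow> rat" where
  "homog f x y = (\<Sum>i\<le>degree f. of_int (coeff f i) * x ^ i * y ^ (degree f - i))"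

end

theory Submission
  imports Defs "Berlekamp_Zassenhaus.Factor_Bound"
begin
lemma lin_irr:
  fixes p :: "'a::field poly"
  assumes "irreducible p" "b \<noteq> 0"
  shows "irreducible (pcompose p [:c,b:])"
proof -
  let ?L = "[:c,b:]" and ?qi = "[:-c/b, 1/b:]"
  have ird: "irreducible\<^sub>d p" using assms by simp
  have inv: "pcompose ?L ?qi = [:0,1:]" using assms(2) by (simp add: pcompose_pCons)
  have "p = pcompose p (pcompose ?L ?qi)" by (simp only: inv pcompose_idR)
  hence pp: "p = pcompose (pcompose p ?L) ?qi" by (simp only: pcompose_assoc)
  have dL: "degree (pcompose p ?L) = degree p" using assms(2) by (simp add: degree_pcompose)
  have "irreducible\<^sub>d (pcompose p ?L)"
  proof (rule irreducible\<^sub>dI)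
    show "degree (pcompose p ?L) > 0" using dL irreducible\<^sub>dD(1)[OF ird] by simp
  next
    fix q r assume q: "degree q < degree (pcompose p ?L)" and r: "degree r < degree (pcompose p ?L)"
      and e: "pcompose p ?L = q * r"
    have "p = pcompose q ?qi * pcompose r ?qi" using pp e by (simp add: pcompose_mult)
    moreover have "degree (pcompose q ?qi) < degree p" "degree (pcompose r ?qi) < degree p"
      using q r dL assms(2) by (simp_all add: degree_pcompose)
    ultimately show False using irreducible\<^sub>dD(2)[OF ird] by blast
  qed
  thus ?thesis by simp
qed

lemma coeff_pcompose_X2:
  fixes M :: "'a::comm_ring_1 poly"
  shows "Polynomial.coeff (pcompose M [:0,0,1:]) n = (if even n then Polynomial.coeff M (n div 2) else 0)"
proof (induction M arbitrary: n)
  case 0 thus ?case by simp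
next
  case (pCons a M)
  show ?case
    apply (cases n) apply (simp add: pcompose_pCons)
    subgoal for m apply (cases m) apply (simp add: pcompose_pCons)
      using pCons(2) by (auto simp add: pcompose_pCons coeff_pCons)
    done
qed

lemma even_poly:
  fixes p :: "rat poly"
  assumes "pcompose p [:0,-1:] = p"
  shows "\<exists>M. p = pcompose M [:0,0,1:]"
proof -
  have odd0: "Polynomial.coeff p n = 0" if "odd n" for n
  proof -
    have "Polynomial.coeff (pcompose p [:0,-1:]) n = (-1)^n * Polynomial.coeff p n" by (rule coeff_pcompose_linear)
    with assms that show ?thesis by simp
  qed
  define M where "M = Poly (map (\<lambda>i. Polynomial.coeff p (2*i)) [0..<Suc (degree p)])"
  have cM: "Polynomial.coeff M i = Polynomial.coeff p (2*i)" for i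
  proof (cases "i < Suc (degree p)")
    case True thus ?thesis by (simp add: M_def nth_default_def del: upt_Suc)
  next
    case False
    hence "Polynomial.coeff p (2*i) = 0" by (intro coeff_eq_0) simp
    thus ?thesis using False by (simp add: M_def nth_default_def)
  qed
  have "p = pcompose M [:0,0,1:]"
  proof (rule poly_eqI)
    fix n show "Polynomial.coeff p n = Polynomial.coeff (pcompose M [:0,0,1:]) n"
      unfolding coeff_pcompose_X2 by (auto simp add: cM odd0)
  qed
  thus ?thesis by blast
qed

lemma dvd_X2:
  fixes M k :: "rat poly"
  assumes "pcompose M [:0,0,1:] dvd pcompose k [:0,0,1:]"
  shows "M dvd k"
proof (cases "M = 0")
  case True
  hence "pcompose k [:0,0,1:] = 0" using assms by simp
  hence "k = 0" by (simp add: pcompose_eq_0_iff)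
  thus ?thesis by simp
next
  case False
  let ?X = "[:0,0,1:] :: rat poly"
  define q where "q = k div M"
  define rm where "rm = k mod M"
  have k: "k = M * q + rm" unfolding q_def rm_def by simp
  have "pcompose k ?X = pcompose M ?X * pcompose q ?X + pcompose rm ?X"
    by (subst k) (simp add: pcompose_add pcompose_mult)
  hence "pcompose M ?X dvd pcompose rm ?X"
    using assms by (metis dvd_add_right_iff dvd_triv_left)
  have "rm = 0"
  proof (rule ccontr)
    assume rm0: "rm \<noteq> 0"
    have "degree rm < degree M" using rm0 False unfolding rm_def by (simp add: degree_mod_less')
    hence "degree (pcompose rm ?X) < degree (pcompose M ?X)" by (simp add: degree_pcompose)
    moreover have "pcompose rm ?X \<noteq> 0" using rm0 by (simp add: pcompose_eq_0_iff)
    ultimately show False using \<open>pcompose M ?X dvd pcompose rm ?X\<close>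
      by (meson dvd_imp_degree_le not_le)
  qed
  thus ?thesis using k by simp
qed

lemma irr_deg: fixes p :: "rat poly" shows "irreducible p \<Longrightarrow> degree p > 0"
  using irreducible\<^sub>dD(1) irreducible_connect_field by blast

lemma factor_unit:
  fixes M k :: "rat poly"
  assumes "irreducible k" "M dvd k" "degree M > 0"
  shows "\<exists>c. c \<noteq> 0 \<and> k = Polynomial.smult c M"
proof -
  obtain q where q: "k = M * q" using assms(2) by blast
  have "\<not> is_unit M" using assms(3) by (auto simp: is_unit_iff_degree)
  hence "is_unit q" using irreducibleD[OF assms(1) q] by blast
  then obtain c where "q = [:c:]" "c dvd 1" using is_unit_poly_iff[of q] by blast
  hence "q = [:c:]" "c \<noteq> 0" by auto
  thus ?thesis using q by (auto simp: mult.commute)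
qed

lemma sq_ident: "(c*a*a)*(c*b*b*s)*s = (c*a*b)^2*(s*s::'a::comm_ring_1)"
  unfolding power2_eq_square by (simp only: mult_ac)

lemma core:
  fixes k :: "rat poly"
  assumes irr: "irreducible k" and d2: "degree k \<ge> 2"
    and red: "\<not> irreducible (pcompose k [:0,0,1:])"
  shows "\<exists>w. w \<noteq> 0 \<and> poly k 0 * lead_coeff k * (-1) ^ degree k = w ^ 2"
proof -
  let ?X = "[:0,0,1:] :: rat poly" and ?N = "[:0,-1:] :: rat poly"
  define K where "K = pcompose k ?X"
  have irrd: "irreducible\<^sub>d k" using irr by simp
  have k0: "poly k 0 \<noteq> 0"
  proof
    assume "poly k 0 = 0"
    hence "[:-0,1:] dvd k" by (simp only: poly_eq_0_iff_dvd)
    then obtain q where q: "k = [:0,1:] * q" by auto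
    have "q \<noteq> 0" using q irr by auto
    hence "degree k = 1 + degree q" using q by (simp add: degree_mult_eq)
    thus False using irreducible\<^sub>dD(2)[OF irrd, of "[:0,1:]" q] q d2 by simp
  qed
  have knz: "k \<noteq> 0" using irr by auto
  have KN: "pcompose K ?N = K" unfolding K_def by (simp add: pcompose_assoc[symmetric] pcompose_pCons)
  have NN: "\<And>p::rat poly. pcompose (pcompose p ?N) ?N = p"
    by (simp add: pcompose_assoc[symmetric] pcompose_pCons) (metis pcompose_idR one_pCons)
  have K0: "K \<noteq> 0" unfolding K_def using knz by (simp add: pcompose_eq_0_iff)
  have degK: "degree K = 2 * degree k" unfolding K_def by (simp add: degree_pcompose)
  have Kpoly0: "poly K 0 = poly k 0" unfolding K_def by (simp add: poly_pcompose)
  have Klc: "lead_coeff K = lead_coeff k" unfolding K_def by (subst lead_coeff_comp) auto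
  have "\<not> is_unit K" using degK d2 K0 by (auto simp: is_unit_iff_degree)
  then obtain h where hK: "h dvd K" and ph: "prime h" using prime_divisor_exists K0 by blast
  have irh: "irreducible h" using ph prime_elem_imp_irreducible prime_def by blast
  have dh: "degree h > 0" using irh irr_deg by blast
  have h0: "h \<noteq> 0" using ph by auto
  define hm where "hm = pcompose h ?N"
  have irhm: "irreducible hm" unfolding hm_def using lin_irr[OF irh, of "-1" 0] by simp
  have dhm: "degree hm = degree h" unfolding hm_def by (simp add: degree_pcompose)
  have hmK: "hm dvd K"
  proof -
    obtain q where "K = h * q" using hK by blast
    hence "pcompose K ?N = hm * pcompose q ?N" unfolding hm_def by (simp add: pcompose_mult)
    hence "K = hm * pcompose q ?N" using KN by simp
    thus ?thesis by (rule dvdI)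
  qed
  have poly_hm0: "poly hm 0 = poly h 0" unfolding hm_def by (simp add: poly_pcompose)
  have lc_hm: "lead_coeff hm = lead_coeff h * (-1) ^ degree h"
    unfolding hm_def by (subst lead_coeff_comp) auto
  show ?thesis
  proof (cases "algebraic_semidom_class.coprime h hm")
    case True
    define P where "P = h * hm"
    have PK: "P dvd K" unfolding P_def using True hK hmK by (simp add: divides_mult)
    have "pcompose P ?N = P" unfolding P_def hm_def by (simp add: pcompose_mult NN mult.commute)
    then obtain M where M: "P = pcompose M ?X" using even_poly by blast
    have MK: "M dvd k" using dvd_X2[of M k] PK unfolding M K_def by blast
    have "degree P = 2 * degree h" unfolding P_def using h0 irhm dhm
      by (subst degree_mult_eq) auto
    hence dM: "degree M = degree h" using M by (simp add: degree_pcompose)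
    obtain c where c: "c \<noteq> 0" "k = Polynomial.smult c M" using factor_unit[OF irr MK] dM dh by auto
    have KP: "K = Polynomial.smult c P" unfolding K_def M c(2) by (simp add: pcompose_smult)
    have dk: "degree k = degree h" using c dM by simp
    have "poly k 0 = c * poly h 0 * poly h 0" using Kpoly0 KP poly_hm0 by (simp add: P_def)
    moreover have "lead_coeff k = c * lead_coeff h * lead_coeff h * (-1) ^ degree h"
      using Klc KP lc_hm c(1) by (simp add: P_def lead_coeff_mult)
    ultimately have "poly k 0 * lead_coeff k * (-1) ^ degree k = (c * poly h 0 * lead_coeff h) ^ 2 * ((-1) ^ degree h * (-1) ^ degree h)"
      using dk sq_ident[of c "poly h 0" "lead_coeff h" "(-1) ^ degree h"] by simp
    also have "(-1::rat) ^ degree h * (-1) ^ degree h = 1" by (simp flip: power_mult_distrib)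
    finally have eqW: "poly k 0 * lead_coeff k * (-1) ^ degree k = (c * poly h 0 * lead_coeff h) ^ 2" by simp
    have nz: "poly k 0 * lead_coeff k * (-1) ^ degree k \<noteq> 0" using k0 knz by simp
    have Wnz: "c * poly h 0 * lead_coeff h \<noteq> 0"
    proof
      assume "c * poly h 0 * lead_coeff h = 0"
      hence "poly k 0 * lead_coeff k * (-1) ^ degree k = 0" unfolding eqW by simp
      thus False using nz by contradiction
    qed
    show ?thesis
      by (rule exI[of _ "c * poly h 0 * lead_coeff h"], rule conjI, rule Wnz, rule eqW)
  next
    case False
    have "h dvd hm" using prime_imp_coprime[OF ph, of hm] False by blast
    then obtain q where q: "hm = h * q" by blast
    have "q \<noteq> 0" using q irhm by auto
    hence "degree q = 0" using q dhm h0 by (simp add: degree_mult_eq)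
    then obtain l where ql: "q = [:l:]" by (rule degree_eq_zeroE)
    have hml: "hm = Polynomial.smult l h" using q ql by simp
    have "h = pcompose hm ?N" unfolding hm_def NN ..
    also have "\<dots> = Polynomial.smult (l * l) h" unfolding hml pcompose_smult hm_def[symmetric] hml by simp
    finally have hh: "h = Polynomial.smult (l * l) h" .
    have "Polynomial.smult (l * l - 1) h = Polynomial.smult (l * l) h - h" by (simp add: smult_diff_left)
    hence "Polynomial.smult (l * l - 1) h = 0" using hh by simp
    hence "l * l = 1" using h0 by simp
    hence "l = 1 \<or> l = -1" by (simp only: square_eq_1_iff)
    thus ?thesis
    proof
      assume "l = 1"
      hence "pcompose h ?N = h" using hml hm_def by simp
      then obtain M where M: "h = pcompose M ?X" using even_poly by blast
      have MK: "M dvd k" using dvd_X2[of M k] hK unfolding M K_def by blast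
      have "degree M > 0" using dh M by (simp add: degree_pcompose)
      then obtain c where c: "c \<noteq> 0" "k = Polynomial.smult c M" using factor_unit[OF irr MK] by auto
      have "K = Polynomial.smult c h" unfolding K_def M c(2) by (simp add: pcompose_smult)
      hence "irreducible K" using irh c(1) by simp
      thus ?thesis using red K_def by simp
    next
      assume "l = -1"
      hence "poly hm 0 = - poly h 0" using hml by simp
      hence "poly h 0 = 0" using poly_hm0 by simp
      moreover obtain q2 where "K = h * q2" using hK by blast
      ultimately have "poly K 0 = 0" by simp
      thus ?thesis using Kpoly0 k0 by simp
    qed
  qed
qed


lemma gauss: fixes f :: "int poly"
  assumes "irreducible f" "degree f > 0"
  shows "irreducible (map_poly rat_of_int f)"
proof -
  have "content f = 1" using assms nonconst_poly_irreducible_iff by blast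
  hence "irreducible\<^sub>d f" using irreducible_primitive_connect assms(1)
    by (metis primitive_iff_content_eq_1)
  from irreducible\<^sub>d_int_rat[OF this] show ?thesis by simp
qed

lemma homog_eq:
  fixes f :: "int poly"
  assumes "y \<noteq> 0"
  shows "homog f x y = y ^ degree f * poly (map_poly rat_of_int f) (x / y)"
proof -
  have "y ^ degree f * poly (map_poly rat_of_int f) (x / y)
      = (\<Sum>i\<le>degree f. y ^ degree f * (of_int (Polynomial.coeff f i) * (x / y) ^ i))"
    by (simp add: poly_altdef sum_distrib_left degree_map_poly)
  also have "\<dots> = (\<Sum>i\<le>degree f. of_int (Polynomial.coeff f i) * x ^ i * y ^ (degree f - i))"
  proof (rule sum.cong)
    fix i assume "i \<in> {..degree f}"
    hence "y ^ degree f = y ^ i * y ^ (degree f - i)" by (simp flip: power_add)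
    thus "y ^ degree f * (of_int (Polynomial.coeff f i) * (x / y) ^ i) = of_int (Polynomial.coeff f i) * x ^ i * y ^ (degree f - i)"
      using assms by (simp add: power_divide)
  qed simp
  finally show ?thesis unfolding homog_def by simp
qed

lemma final_alg:
  fixes A P w Fr s :: rat
  assumes "A \<noteq> 0" "P \<noteq> 0" "Fr * (A * P) * s = w ^ 2"
  shows "A * (w / (A * P)) ^ 2 = (s / P) * Fr"
proof -
  have "A * (w / (A * P)) ^ 2 = A * w ^ 2 / (A * P) ^ 2" by (simp add: power_divide)
  also have "\<dots> = A * (Fr * (A * P) * s) / (A * P) ^ 2" using assms(3) by simp
  also have "\<dots> = (s / P) * Fr" using assms(1,2) by (simp add: power2_eq_square field_simps)
  finally show ?thesis .
qed

theorem theorem6p1: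
  fixes f :: "int poly"
  assumes "irreducible f"
    and "\<exists>g :: rat poly. degree g = 2 \<and>
           \<not> irreducible (pcompose (map_poly of_int f) g)"
  shows "\<exists>x y z :: rat. y * z \<noteq> 0 \<and>
           of_int (lead_coeff f) * z ^ 2 = homog f x y"
proof -
  define F where "F = (map_poly of_int f :: rat poly)"
  define d where "d = degree f"
  define A where "A = (of_int (lead_coeff f) :: rat)"
  have f0: "f \<noteq> 0" using assms(1) by auto
  have A0: "A \<noteq> 0" using f0 by (simp add: A_def)
  have degF: "degree F = d" unfolding F_def d_def by (simp add: degree_map_poly)
  have lcF: "lead_coeff F = A" unfolding F_def A_def by (simp add: degree_map_poly)
  consider "d = 0" | "d = 1" | "d \<ge> 2" by linarith
  thus ?thesis
  proof cases
    case 1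
    have "homog f 0 1 = A" using 1 unfolding homog_def A_def d_def by simp
    thus ?thesis by (intro exI[of _ 0] exI[of _ 1]) (simp add: A_def)
  next
    case 2
    define B where "B = (of_int (Polynomial.coeff f 0) :: rat)"
    have "homog f ((A - B) / A) 1 = B + A * ((A - B) / A)"
      using 2 unfolding homog_def A_def B_def d_def by simp
    also have "\<dots> = A" using A0 by (simp add: field_simps)
    finally show ?thesis by (intro exI[of _ "(A - B) / A"] exI[of _ 1]) (simp add: A_def)
  next
    case 3
    obtain g :: "rat poly" where dg: "degree g = 2" and red: "\<not> irreducible (pcompose F g)"
      using assms(2) unfolding F_def by blast
    have irrF: "irreducible F" using gauss[OF assms(1)] 3 unfolding F_def d_def by simp
    define a where "a = Polynomial.coeff g 2"
    define c1 where "c1 = Polynomial.coeff g 1"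
    define c0 where "c0 = Polynomial.coeff g 0"
    have a0: "a \<noteq> 0"
    proof
      assume "a = 0"
      hence "lead_coeff g = 0" using dg unfolding a_def by simp
      hence "g = 0" by simp
      thus False using dg by simp
    qed
    have g: "g = [:c0, c1, a:]"
    proof (rule poly_eqI)
      fix n show "Polynomial.coeff g n = Polynomial.coeff [:c0, c1, a:] n"
        using coeff_eq_0[of g n] dg unfolding a_def c1_def c0_def
        by (cases n; cases "n - 1"; cases "n - 2") (auto simp: coeff_pCons numeral_2_eq_2)
    qed
    define s where "s = - c1 / (2 * a)"
    define r where "r = c0 - c1 ^ 2 / (4 * a)"
    define k where "k = pcompose F [:r, a:]"
    have irrk: "irreducible k" unfolding k_def using lin_irr[OF irrF a0] .
    have dk: "degree k = d" unfolding k_def using a0 degF by (simp add: degree_pcompose)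
    have gs: "pcompose g [:s, 1:] = pcompose [:r, a:] [:0, 0, 1:]"
    proof (rule poly_eq_poly_eq_iff[THEN iffD1], rule ext)
      fix x
      show "poly (pcompose g [:s, 1:]) x = poly (pcompose [:r, a:] [:0, 0, 1:]) x"
        using a0 unfolding g s_def r_def poly_pcompose
        by (simp add: field_simps power2_eq_square)
    qed
    define K where "K = pcompose k [:0, 0, 1:]"
    have KK: "K = pcompose (pcompose F g) [:s, 1:]"
      unfolding K_def k_def by (simp only: pcompose_assoc[symmetric] gs)
    have "\<not> irreducible K"
    proof
      assume "irreducible K"
      hence "irreducible (pcompose K [:-s, 1:])" using lin_irr[of K 1 "-s"] by simp
      moreover have "pcompose [:s, 1:] [:-s, 1:] = [:0, 1 :: rat:]" by (simp add: pcompose_pCons)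
      hence "pcompose K [:-s, 1:] = pcompose F g"
        unfolding KK by (simp only: pcompose_assoc[symmetric] pcompose_idR)
      ultimately show False using red by simp
    qed
    then obtain w where w: "w \<noteq> 0" "poly k 0 * lead_coeff k * (-1) ^ degree k = w ^ 2"
      using core[OF irrk] 3 dk K_def by auto
    have pk0: "poly k 0 = poly F r" unfolding k_def by (simp add: poly_pcompose)
    have lck: "lead_coeff k = A * a ^ d" unfolding k_def
      by (subst lead_coeff_comp) (use a0 lcF degF in auto)
    define y where "y = - 1 / a"
    have y0: "y \<noteq> 0" using a0 by (simp add: y_def)
    have yd: "y ^ d = (-1) ^ d / a ^ d" unfolding y_def by (rule power_divide)
    have hom: "homog f (r * y) y = y ^ d * poly F r"
      using homog_eq[OF y0, of f "r * y"] y0 unfolding F_def d_def by simp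
    have eq: "poly F r * (A * a ^ d) * (-1) ^ d = w ^ 2" using w(2) pk0 lck dk by simp
    have "A * (w / (A * a ^ d)) ^ 2 = ((-1) ^ d / a ^ d) * poly F r"
      by (rule final_alg[OF A0 _ eq]) (use a0 in simp)
    hence "A * (w / (A * a ^ d)) ^ 2 = homog f (r * y) y" using hom yd by simp
    moreover have "y * (w / (A * a ^ d)) \<noteq> 0" using y0 w(1) A0 a0 by simp
    ultimately show ?thesis unfolding A_def by blast
  qed
qed

end
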